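(* Let $G=(\mathscr{V},\mathscr{E},m,\theta)$ be a bi-partite weighted graph and $V:\mathscr{V}\to[0,\infty)$. The following are equivalent: (i) $\langle f,(d_G(Q)-V(Q))f\rangle\le\langle f,\Delta_{\mathscr{E},\theta}f\rangle$ for all $f\in\mathcal{C}_c(\mathscr{V})$; (ii) $\langle f,\Delta_{\mathscr{E},\theta}f\rangle\le\langle f,(d_G(Q)+V(Q))f\rangle$ for all $f\in\mathcal{C}_c(\mathscr{V})$; (iii) $|\langle f,\mathcal{A}_{\mathscr{E},\theta}f\rangle|\le\langle f,V(Q)f\rangle$ for all $f\in\mathcal{C}_c(\mathscr{V})$, where $(\mathcal{A}_{\mathscr{E},\theta}f)(x):=m^{-2}(x)\sum_{y\in\mathscr{V}}\mathscr{E}(x,y)e^{i\theta(x,y)}f(y)$ is the magnetic adjacency matrix.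
   Context: A weighted graph $G=(\mathscr{V},\mathscr{E},m,\theta)$: $\mathscr{V}$ countable, $\mathscr{E}:\mathscr{V}\times\mathscr{V}\to[0,\infty)$ symmetric, $m:\mathscr{V}\to(0,\infty)$, $\theta:\mathscr{V}\times\mathscr{V}\to[-\pi,\pi]$ antisymmetric; $x\sim y$ iff $\mathscr{E}(x,y)\neq0$; assumed locally finite, connected, without loops. Bi-partite: $\mathscr{V}$ can be partitioned into two subsets such that no two vertices in the same subset are neighbors. In $\ell^2(\mathscr{V},m^2)$ (inner product $\sum_x m^2(x)\overline{f(x)}g(x)$), $\Delta_{\mathscr{E},\theta}$ acts on finitely supported $f$ by $(\Delta_{\mathscr{E},\theta}f)(x)=m^{-2}(x)\sum_y\mathscr{E}(x,y)(f(x)-e^{i\theta(x,y)}f(y))$; $d_G(x)=m^{-2}(x)\sum_y\mathscr{E}(x,y)$; $W(Q)$ is multiplication by $W$; $\mathcal{C}_c(\mathscr{V})$ = finitely supported functions. *)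

theory Defs
  imports "HOL-Analysis.Analysis"
begin

definition nbrs :: "('v \<Rightarrow> 'v \<Rightarrow> real) \<Rightarrow> 'v \<Rightarrow> 'v set" where
  "nbrs E x = {y. E x y \<noteq> 0}"

definition weighted_graph ::
  "('v::countable \<Rightarrow> 'v \<Rightarrow> real) \<Rightarrow> ('v \<Rightarrow> real) \<Rightarrow> ('v \<Rightarrow> 'v \<Rightarrow> real) \<Rightarrow> bool" where
  "weighted_graph E m \<theta> \<longleftrightarrow>
     (\<forall>x y. E x y \<ge> 0 \<and> E x y = E y x) \<and>
     (\<forall>x. m x > 0) \<and>
     (\<forall>x y. \<theta> x y = - \<theta> y x \<and> - pi \<le> \<theta> x y \<and> \<theta> x y \<le> pi) \<and>
     (\<forall>x. finite (nbrs E x)) \<and>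
     (\<forall>x y. (\<lambda>a b. E a b \<noteq> 0)\<^sup>*\<^sup>* x y) \<and>
     (\<forall>x. E x x = 0)"

definition bipartite :: "('v \<Rightarrow> 'v \<Rightarrow> real) \<Rightarrow> bool" where
  "bipartite E \<longleftrightarrow> (\<exists>A. \<forall>x y. E x y \<noteq> 0 \<longrightarrow> (x \<in> A \<longleftrightarrow> y \<notin> A))"

definition finsupp :: "('v \<Rightarrow> complex) \<Rightarrow> bool" where
  "finsupp f \<longleftrightarrow> finite {x. f x \<noteq> 0}"

definition ip :: "('v \<Rightarrow> real) \<Rightarrow> ('v \<Rightarrow> complex) \<Rightarrow> ('v \<Rightarrow> complex) \<Rightarrow> complex" where
  "ip m f g = (\<Sum>x\<in>{x. f x \<noteq> 0}. complex_of_real ((m x)\<^sup>2) * cnj (f x) * g x)"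

definition mag_laplacian ::
  "('v \<Rightarrow> 'v \<Rightarrow> real) \<Rightarrow> ('v \<Rightarrow> real) \<Rightarrow> ('v \<Rightarrow> 'v \<Rightarrow> real) \<Rightarrow> ('v \<Rightarrow> complex) \<Rightarrow> 'v \<Rightarrow> complex" where
  "mag_laplacian E m \<theta> f x =
     complex_of_real (1 / (m x)\<^sup>2) *
       (\<Sum>y\<in>nbrs E x. complex_of_real (E x y) * (f x - cis (\<theta> x y) * f y))"

definition mag_adjacency ::
  "('v \<Rightarrow> 'v \<Rightarrow> real) \<Rightarrow> ('v \<Rightarrow> real) \<Rightarrow> ('v \<Rightarrow> 'v \<Rightarrow> real) \<Rightarrow> ('v \<Rightarrow> complex) \<Rightarrow> 'v \<Rightarrow> complex" where
  "mag_adjacency E m \<theta> f x =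
     complex_of_real (1 / (m x)\<^sup>2) *
       (\<Sum>y\<in>nbrs E x. complex_of_real (E x y) * cis (\<theta> x y) * f y)"

definition degree :: "('v \<Rightarrow> 'v \<Rightarrow> real) \<Rightarrow> ('v \<Rightarrow> real) \<Rightarrow> 'v \<Rightarrow> real" where
  "degree E m x = (1 / (m x)\<^sup>2) * (\<Sum>y\<in>nbrs E x. E x y)"

definition mult_op :: "('v \<Rightarrow> real) \<Rightarrow> ('v \<Rightarrow> complex) \<Rightarrow> 'v \<Rightarrow> complex" where
  "mult_op W f x = complex_of_real (W x) * f x"

end

theory Submission
  imports Defs
begin

definition dsum :: "('v \<Rightarrow> 'v \<Rightarrow> real) \<Rightarrow> ('v \<Rightarrow> 'v \<Rightarrow> real) \<Rightarrow> ('v \<Rightarrow> complex) \<Rightarrow> complex" where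
  "dsum E \<theta> f = (\<Sum>x\<in>{x. f x \<noteq> 0}. \<Sum>y\<in>{x. f x \<noteq> 0}.
      complex_of_real (E x y) * cis (\<theta> x y) * cnj (f x) * f y)"

lemma ip_diff:
  "ip m f (\<lambda>x. g x - h x) = ip m f g - ip m f h"
  unfolding ip_def by (simp add: algebra_simps sum_subtractf)

lemma lap_eq:
  "mag_laplacian E m \<theta> f x = mult_op (degree E m) f x - mag_adjacency E m \<theta> f x"
proof -
  have "(\<Sum>y\<in>nbrs E x. complex_of_real (E x y) * (f x - cis (\<theta> x y) * f y))
     = (\<Sum>y\<in>nbrs E x. complex_of_real (E x y) * f x) - (\<Sum>y\<in>nbrs E x. complex_of_real (E x y) * cis (\<theta> x y) * f y)"
    by (simp add: right_diff_distrib sum_subtractf mult.assoc)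
  also have "(\<Sum>y\<in>nbrs E x. complex_of_real (E x y) * f x) = complex_of_real (\<Sum>y\<in>nbrs E x. E x y) * f x"
    by (simp add: sum_distrib_right)
  finally show ?thesis
    unfolding mag_laplacian_def mult_op_def degree_def mag_adjacency_def
    by (simp add: right_diff_distrib mult.assoc)
qed

lemma multop_diff:
  "mult_op (\<lambda>x. a x - b x) f x = mult_op a f x - mult_op b f x"
  "mult_op (\<lambda>x. a x + b x) f x = mult_op a f x + mult_op b f x"
  unfolding mult_op_def by (simp_all add: algebra_simps)

lemma ip_add:
  "ip m f (\<lambda>x. g x + h x) = ip m f g + ip m f h"
  unfolding ip_def by (simp add: algebra_simps sum.distrib)

lemma Q_eq:
  assumes fin: "\<forall>x. finite (nbrs E x)" and mpos: "\<forall>x. m x > 0" and fs: "finsupp f"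
  shows "ip m f (mag_adjacency E m \<theta> f) = dsum E \<theta> f"
proof -
  let ?S = "{x. f x \<noteq> 0}"
  have finS: "finite ?S" using fs unfolding finsupp_def .
  have inner: "(\<Sum>y\<in>nbrs E x. complex_of_real (E x y) * cis (\<theta> x y) * cnj (f x) * f y)
     = (\<Sum>y\<in>?S. complex_of_real (E x y) * cis (\<theta> x y) * cnj (f x) * f y)" for x
  proof -
    have "(\<Sum>y\<in>nbrs E x. complex_of_real (E x y) * cis (\<theta> x y) * cnj (f x) * f y)
       = (\<Sum>y\<in>nbrs E x \<inter> ?S. complex_of_real (E x y) * cis (\<theta> x y) * cnj (f x) * f y)"
      by (rule sum.mono_neutral_right) (use fin in auto)
    also have "\<dots> = (\<Sum>y\<in>?S. complex_of_real (E x y) * cis (\<theta> x y) * cnj (f x) * f y)"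
      by (rule sum.mono_neutral_left) (use finS in \<open>auto simp: nbrs_def\<close>)
    finally show ?thesis .
  qed
  have "ip m f (mag_adjacency E m \<theta> f) = (\<Sum>x\<in>?S. \<Sum>y\<in>nbrs E x. complex_of_real (E x y) * cis (\<theta> x y) * cnj (f x) * f y)"
    unfolding ip_def mag_adjacency_def
  proof (rule sum.cong[OF refl])
    fix x
    have mx: "m x \<noteq> 0" using mpos by (metis less_irrefl)
    have "complex_of_real ((m x)\<^sup>2) * cnj (f x) *
        (complex_of_real (1 / (m x)\<^sup>2) * (\<Sum>y\<in>nbrs E x. complex_of_real (E x y) * cis (\<theta> x y) * f y))
      = (complex_of_real ((m x)\<^sup>2) * complex_of_real (1 / (m x)\<^sup>2)) * (cnj (f x) * (\<Sum>y\<in>nbrs E x. complex_of_real (E x y) * cis (\<theta> x y) * f y))"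
      by (simp add: algebra_simps)
    also have "complex_of_real ((m x)\<^sup>2) * complex_of_real (1 / (m x)\<^sup>2) = 1"
      using mx by (simp flip: of_real_mult)
    finally show "complex_of_real ((m x)\<^sup>2) * cnj (f x) *
        (complex_of_real (1 / (m x)\<^sup>2) * (\<Sum>y\<in>nbrs E x. complex_of_real (E x y) * cis (\<theta> x y) * f y))
       = (\<Sum>y\<in>nbrs E x. complex_of_real (E x y) * cis (\<theta> x y) * cnj (f x) * f y)"
      by (simp add: sum_distrib_left algebra_simps)
  qed
  also have "\<dots> = dsum E \<theta> f" unfolding dsum_def using inner by simp
  finally show ?thesis .
qed

lemma dsum_real:
  assumes sym: "\<forall>x y. E x y = E y x" and anti: "\<forall>x y. \<theta> x y = - \<theta> y x"
  shows "cnj (dsum E \<theta> f) = dsum E \<theta> f"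
proof -
  let ?S = "{x. f x \<noteq> 0}"
  have "cnj (dsum E \<theta> f) = (\<Sum>x\<in>?S. \<Sum>y\<in>?S.
      complex_of_real (E y x) * cis (\<theta> y x) * cnj (f y) * f x)"
    unfolding dsum_def cnj_sum
  proof (intro sum.cong refl)
    fix x y
    have t: "\<theta> y x = - \<theta> x y" by (rule anti[rule_format])
    have e: "E y x = E x y" by (rule sym[rule_format])
    show "cnj (complex_of_real (E x y) * cis (\<theta> x y) * cnj (f x) * f y) =
      complex_of_real (E y x) * cis (\<theta> y x) * cnj (f y) * f x"
      unfolding t e by (simp add: cis_cnj)
  qed
  also have "\<dots> = dsum E \<theta> f" unfolding dsum_def by (rule sum.swap)
  finally show ?thesis .
qed

lemma supp_flip:
  "{x. (if x \<in> A then 1 else -1 :: complex) * f x \<noteq> 0} = {x. f x \<noteq> 0}"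
  by auto

lemma dsum_flip:
  assumes bp: "\<forall>x y. E x y \<noteq> 0 \<longrightarrow> (x \<in> A \<longleftrightarrow> y \<notin> A)"
  shows "dsum E \<theta> (\<lambda>x. (if x \<in> A then 1 else -1 :: complex) * f x) = - dsum E \<theta> f"
  unfolding dsum_def supp_flip
  unfolding sum_negf[symmetric]
proof (intro sum.cong refl)
  fix x y
  show "complex_of_real (E x y) * cis (\<theta> x y) * cnj ((if x \<in> A then 1 else - 1) * f x) *
          ((if y \<in> A then 1 else - 1) * f y) =
         - (complex_of_real (E x y) * cis (\<theta> x y) * cnj (f x) * f y)"
  proof (cases "E x y = 0")
    case True then show ?thesis by simp
  next
    case False
    then have "x \<in> A \<longleftrightarrow> y \<notin> A" using bp by blast
    then show ?thesis by (cases "x \<in> A") auto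
  qed
qed

lemma ipV_flip:
  "ip m (\<lambda>x. (if x \<in> A then 1 else -1 :: complex) * f x)
      (mult_op V (\<lambda>x. (if x \<in> A then 1 else -1 :: complex) * f x)) = ip m f (mult_op V f)"
  unfolding ip_def supp_flip mult_op_def
  by (intro sum.cong refl) auto

lemma finsupp_flip:
  "finsupp (\<lambda>x. (if x \<in> A then 1 else -1 :: complex) * f x) = finsupp f"
  unfolding finsupp_def supp_flip ..

theorem proposition3p1:
  fixes E :: "'v::countable \<Rightarrow> 'v \<Rightarrow> real" and m :: "'v \<Rightarrow> real"
    and \<theta> :: "'v \<Rightarrow> 'v \<Rightarrow> real" and V :: "'v \<Rightarrow> real"
  assumes "weighted_graph E m \<theta>" and "bipartite E" and "\<forall>x. V x \<ge> 0"
  shows "((\<forall>f. finsupp f \<longrightarrow>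
            Re (ip m f (mult_op (\<lambda>x. degree E m x - V x) f)) \<le> Re (ip m f (mag_laplacian E m \<theta> f)))
        \<longleftrightarrow> (\<forall>f. finsupp f \<longrightarrow>
            Re (ip m f (mag_laplacian E m \<theta> f)) \<le> Re (ip m f (mult_op (\<lambda>x. degree E m x + V x) f))))
       \<and> ((\<forall>f. finsupp f \<longrightarrow>
            Re (ip m f (mag_laplacian E m \<theta> f)) \<le> Re (ip m f (mult_op (\<lambda>x. degree E m x + V x) f)))
        \<longleftrightarrow> (\<forall>f. finsupp f \<longrightarrow>
            cmod (ip m f (mag_adjacency E m \<theta> f)) \<le> Re (ip m f (mult_op V f))))"
proof -
  note W = assms(1)[unfolded weighted_graph_def]
  note W1 = conjunct1[OF W]
  note mpos = conjunct1[OF conjunct2[OF W]]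
  note W3 = conjunct1[OF conjunct2[OF conjunct2[OF W]]]
  note fin = conjunct1[OF conjunct2[OF conjunct2[OF conjunct2[OF W]]]]
  have sym: "\<forall>x y. E x y = E y x"
  proof (intro allI)
    fix x y have "E x y \<ge> 0 \<and> E x y = E y x" using W1 by (elim allE)
    then show "E x y = E y x" by (rule conjunct2)
  qed
  have anti: "\<forall>x y. \<theta> x y = - \<theta> y x"
  proof (intro allI)
    fix x y have "\<theta> x y = - \<theta> y x \<and> - pi \<le> \<theta> x y \<and> \<theta> x y \<le> pi" using W3 by (elim allE)
    then show "\<theta> x y = - \<theta> y x" by (rule conjunct1)
  qed
  obtain A where bp: "\<forall>x y. E x y \<noteq> 0 \<longrightarrow> (x \<in> A \<longleftrightarrow> y \<notin> A)"
    using assms(2) unfolding bipartite_def by blast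
  define a where "a f = Re (dsum E \<theta> f)" for f :: "'v \<Rightarrow> complex"
  define v where "v f = Re (ip m f (mult_op V f))" for f :: "'v \<Rightarrow> complex"
  define d where "d f = Re (ip m f (mult_op (degree E m) f))" for f :: "'v \<Rightarrow> complex"
  define s where "s f = (\<lambda>x. (if x \<in> A then 1 else -1 :: complex) * f x)" for f :: "'v \<Rightarrow> complex"
  have dreal: "dsum E \<theta> f = complex_of_real (a f)" for f
  proof -
    have "cnj (dsum E \<theta> f) = dsum E \<theta> f" by (rule dsum_real[OF sym anti])
    then have "Im (dsum E \<theta> f) = 0"
      by (metis complex_cnj_complex_of_real complex_is_Real_iff Reals_cnj_iff)
    then show ?thesis unfolding a_def by (simp add: complex_eq_iff)
  qed
  have lap: "Re (ip m f (mag_laplacian E m \<theta> f)) = d f - a f" if "finsupp f" for f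
  proof -
    have "ip m f (mag_laplacian E m \<theta> f) = ip m f (mult_op (degree E m) f) - ip m f (mag_adjacency E m \<theta> f)"
      unfolding lap_eq by (rule ip_diff)
    then show ?thesis using Q_eq[OF fin mpos that, of \<theta>] dreal[of f] unfolding d_def by simp
  qed
  have mi: "Re (ip m f (mult_op (\<lambda>x. degree E m x - V x) f)) = d f - v f" for f
    unfolding multop_diff ip_diff d_def v_def by simp
  have pl: "Re (ip m f (mult_op (\<lambda>x. degree E m x + V x) f)) = d f + v f" for f
    unfolding multop_diff ip_add d_def v_def by simp
  have adj: "cmod (ip m f (mag_adjacency E m \<theta> f)) = \<bar>a f\<bar>" if "finsupp f" for f
    using Q_eq[OF fin mpos that, of \<theta>] dreal[of f] by simp
  have af: "a (s f) = - a f" for f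
    unfolding a_def s_def dsum_flip[OF bp] by simp
  have vf: "v (s f) = v f" for f
    unfolding v_def s_def ipV_flip ..
  have fs: "finsupp (s f) = finsupp f" for f
    unfolding s_def by (rule finsupp_flip)
  have I: "(\<forall>f. finsupp f \<longrightarrow> a f \<le> v f) \<longleftrightarrow> (\<forall>f. finsupp f \<longrightarrow> - a f \<le> v f)"
  proof
    assume H: "\<forall>f. finsupp f \<longrightarrow> a f \<le> v f"
    show "\<forall>f. finsupp f \<longrightarrow> - a f \<le> v f"
    proof (intro allI impI)
      fix f :: "'v \<Rightarrow> complex" assume "finsupp f"
      then have "a (s f) \<le> v (s f)" using H fs by blast
      then show "- a f \<le> v f" by (simp only: af vf)
    qed
  next
    assume H: "\<forall>f. finsupp f \<longrightarrow> - a f \<le> v f"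
    show "\<forall>f. finsupp f \<longrightarrow> a f \<le> v f"
    proof (intro allI impI)
      fix f :: "'v \<Rightarrow> complex" assume "finsupp f"
      then have "- a (s f) \<le> v (s f)" using H fs by blast
      then show "a f \<le> v f" by (simp only: af vf minus_minus)
    qed
  qed
  have e1: "(\<forall>f. finsupp f \<longrightarrow>
            Re (ip m f (mult_op (\<lambda>x. degree E m x - V x) f)) \<le> Re (ip m f (mag_laplacian E m \<theta> f)))
        \<longleftrightarrow> (\<forall>f. finsupp f \<longrightarrow> a f \<le> v f)"
    by (simp add: lap mi)
  have e2: "(\<forall>f. finsupp f \<longrightarrow>
            Re (ip m f (mag_laplacian E m \<theta> f)) \<le> Re (ip m f (mult_op (\<lambda>x. degree E m x + V x) f)))
        \<longleftrightarrow> (\<forall>f. finsupp f \<longrightarrow> - a f \<le> v f)"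
    by (simp add: lap pl)
  have e3: "(\<forall>f. finsupp f \<longrightarrow>
            cmod (ip m f (mag_adjacency E m \<theta> f)) \<le> Re (ip m f (mult_op V f)))
        \<longleftrightarrow> (\<forall>f. finsupp f \<longrightarrow> a f \<le> v f \<and> - a f \<le> v f)"
    by (simp add: adj v_def[symmetric] abs_le_iff)
  show ?thesis
    unfolding e1 e2 e3 using I by blast
qed

end
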